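(* Let $d$ and $p$ be integers with $d>p\ge 2$ and let \[ f_{d,p}(m)=\sum_{j=1}^{p}\binom{j+m-2}{j-1}\binom{d-j+m}{d-j}, \] a polynomial of degree $d-1$ in $m$. Let $\mathbf{V}(f_{d,p})=\{a\in\mathbb{C}: f_{d,p}(a)=0\}$. Then \[ \{-1,-2,\ldots,-(d-p)\}\subset \mathbf{V}(f_{d,p})\cap\mathbb{R}\subset[-(d-2),0). \]
   Context: For an integer $a\ge 0$, $\binom{a+x}{a}$ denotes the polynomial $\prod_{i=1}^{a}(x+i)/a!$ in $x$; so $\binom{j+m-2}{j-1}=\prod_{i=0}^{j-2}(m+i)/(j-1)!$ and $\binom{d-j+m}{d-j}=\prod_{i=1}^{d-j}(m+i)/(d-j)!$. *)

theory Defs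
  imports Complex_Main
begin

text \<open>Note (x gchoose k) = prod_{i<k} (x - i) / k!, so (m + (j-2)) gchoose (j-1) = prod_{i=0}^{j-2}(m+i)/(j-1)!
  and (m + (d-j)) gchoose (d-j) = prod_{i=1}^{d-j}(m+i)/(d-j)!.\<close>
definition f_dp :: "nat \<Rightarrow> nat \<Rightarrow> complex \<Rightarrow> complex" where
  "f_dp d p m = (\<Sum>j = 1..p. ((m + of_int (int j - 2)) gchoose (j - 1))
                            * ((m + of_nat (d - j)) gchoose (d - j)))"

end

theory Submission
  imports Defs
begin

lemma g1: "j \<ge> 1 \<Longrightarrow> ((m::complex) + of_int (int j - 2)) gchoose (j - 1) = pochhammer m (j-1) / fact (j-1)"
proof -
  assume "j \<ge> 1"
  then obtain i where j: "j = Suc i" by (cases j) auto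
  have eq: "m + of_int (int j - 2) - of_nat (j-1) + 1 = m" by (simp add: j)
  have "((m::complex) + of_int (int j - 2)) gchoose (j - 1) = pochhammer (m + of_int (int j - 2) - of_nat (j-1) + 1) (j-1) / fact (j-1)"
    by (rule gbinomial_pochhammer')
  also have "\<dots> = pochhammer m (j-1) / fact (j-1)" by (simp only: eq)
  finally show ?thesis .
qed

lemma g2: "((m::complex) + of_nat k) gchoose k = pochhammer (m+1) k / fact k"
  by (simp add: gbinomial_pochhammer')

definition T :: "nat \<Rightarrow> real \<Rightarrow> nat \<Rightarrow> real" where
  "T d r j = pochhammer r (j-1) * pochhammer (r+1) (d-j) / (fact (j-1) * fact (d-j))"

lemma f_pochhammer: "f_dp d p m = (\<Sum>j=1..p. pochhammer m (j-1) * pochhammer (m+1) (d-j) / (fact (j-1) * fact (d-j)))"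
  unfolding f_dp_def
proof (rule sum.cong[OF refl])
  fix j assume "j \<in> {1..p}"
  then have "j \<ge> 1" by auto
  then show "((m + of_int (int j - 2)) gchoose (j - 1)) * ((m + of_nat (d - j)) gchoose (d - j)) =
    pochhammer m (j-1) * pochhammer (m+1) (d-j) / (fact (j-1) * fact (d-j))"
    by (simp only: g1 g2) simp
qed

lemma f_real: "f_dp d p (of_real r) = of_real (\<Sum>j=1..p. T d r j)"
  unfolding f_pochhammer T_def
  by (simp add: pochhammer_of_real[symmetric])

lemma pos_part:
  assumes "r \<ge> (0::real)" "p \<ge> 1" "d \<ge> 1"
  shows "(\<Sum>j=1..p. T d r j) > 0"
proof -
  have "{1..p} = insert 1 {Suc 1..p}" using assms by auto
  then have eq: "(\<Sum>j=1..p. T d r j) = T d r 1 + (\<Sum>j=Suc 1..p. T d r j)" by simp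
  have "T d r 1 > 0" unfolding T_def using assms by (auto intro!: divide_pos_pos pochhammer_pos)
  moreover have "(\<Sum>j=Suc 1..p. T d r j) \<ge> 0"
  proof (rule sum_nonneg)
    fix j assume "j \<in> {Suc 1..p}"
    have a: "pochhammer r (j-1) \<ge> 0"
      by (simp add: pochhammer_prod prod_nonneg assms)
    have b: "pochhammer (r+1) (d-j) \<ge> 0" using assms by (intro pochhammer_nonneg) auto
    show "T d r j \<ge> 0" unfolding T_def using a b by simp
  qed
  ultimately show ?thesis using eq by linarith
qed

lemma neg_part:
  assumes "n > real d - 2" "2 \<le> p" "p < d"
  shows "(\<Sum>j=1..p. T d (-n) j) \<noteq> 0"
proof -
  define Q where "Q j = pochhammer (n - of_nat j + 2) (j-1) * pochhammer (n - of_nat d + of_nat j) (d-j)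
      / (fact (j-1) * fact (d-j))" for j
  have TQ: "T d (-n) j = (-1)^(d-1) * Q j" if "j \<in> {1..p}" for j
  proof -
    from that assms have j1: "j \<ge> 1" and jd: "j \<le> d" by auto
    have e1: "pochhammer (-n) (j-1) = (-1)^(j-1) * pochhammer (n - of_nat j + 2) (j-1)"
      using pochhammer_minus[of n "j-1"] j1 by (simp add: of_nat_diff algebra_simps)
    have "pochhammer (-n+1) (d-j) = pochhammer (-(n-1)) (d-j)" by simp
    also have "\<dots> = (-1)^(d-j) * pochhammer (n - of_nat d + of_nat j) (d-j)"
      using pochhammer_minus[of "n-1" "d-j"] jd by (simp add: of_nat_diff algebra_simps)
    finally have e2: "pochhammer (-n+1) (d-j) = (-1)^(d-j) * pochhammer (n - of_nat d + of_nat j) (d-j)" .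
    have e3: "((-1::real)^(j-1)) * (-1)^(d-j) = (-1)^(d-1)"
      using j1 jd by (simp add: power_add[symmetric])
    have e4: "((-1::real)^(d-j)) * (-1)^(j-1) = (-1)^(d-1)" using e3 by (simp add: mult.commute)
    show ?thesis unfolding T_def Q_def e1 e2
      using e4 by (simp add: algebra_simps; simp add: One_nat_def)
  qed
  have sumeq: "(\<Sum>j=1..p. T d (-n) j) = (-1)^(d-1) * (\<Sum>j=1..p. Q j)"
    by (simp add: TQ sum_distrib_left)
  have split: "{1..p} = insert 1 (insert 2 {3..p})" using assms by auto
  have Qs: "(\<Sum>j=1..p. Q j) = Q 1 + Q 2 + (\<Sum>j=3..p. Q j)"
    unfolding split by (simp add: add.assoc)
  have rest: "(\<Sum>j=3..p. Q j) \<ge> 0"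
  proof (rule sum_nonneg)
    fix j assume j: "j \<in> {3..p}"
    have "n - of_nat j + 2 > 0" using j assms by auto
    moreover have "n - of_nat d + of_nat j > 0" using j assms by auto
    ultimately show "Q j \<ge> 0" unfolding Q_def
      by (intro divide_nonneg_pos mult_nonneg_nonneg pochhammer_nonneg) auto
  qed
  obtain e where d: "d = Suc (Suc e)" using assms by (metis add_2_eq_Suc le_Suc_ex less_imp_le_nat le_trans)
  define P where "P = pochhammer (n - of_nat e) e"
  have Ppos: "P > 0" unfolding P_def using assms d by (intro pochhammer_pos) auto
  have e1: "e \<ge> 1" using assms d by auto
  have Q1: "Q 1 = (n - of_nat e - 1) * P / fact (Suc e)"
  proof -
    have "pochhammer (n - of_nat d + 1) (Suc e) = (n - of_nat d + 1) * P"
      unfolding P_def pochhammer_rec d by (simp add: algebra_simps)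
    then show ?thesis unfolding Q_def using d by (simp add: algebra_simps)
  qed
  have Q2: "Q 2 = n * P / fact e"
    unfolding Q_def P_def using d by (simp add: algebra_simps)
  have "Q 1 + Q 2 = P / fact e * ((n - of_nat e - 1) / (of_nat e + 1) + n)"
  proof -
    have f: "fact e > (0::real)" by simp
    have g: "real e + 1 > 0" by simp
    have h: "\<And>a s F n P::real. s \<noteq> 0 \<Longrightarrow> F \<noteq> 0 \<Longrightarrow> a * P / (s * F) + n * P / F = P / F * (a / s + n)"
      by (simp add: field_simps)
    have F: "fact (Suc e) = (real e + 1) * fact e" by (simp add: fact_Suc)
    show ?thesis unfolding Q1 Q2 F by (rule h) (use f g in auto)
  qed
  moreover have "(n - of_nat e - 1) / (of_nat e + 1) + n > 0"
  proof -
    have "n > of_nat e" using assms d by auto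
    hence "n - of_nat e - 1 + n * (of_nat e + 1) > 0" using e1
    proof -
      have a: "n * (real e + 2) > real e * (real e + 2)" using \<open>n > of_nat e\<close>
        by (intro mult_strict_right_mono) auto
      have e1': "1 \<le> real e" using e1 by simp
      have "1 * 1 \<le> real e * real e" by (rule mult_mono) (use e1' in auto)
      hence b: "real e * real e \<ge> 1" by simp
      show ?thesis using a b by (simp add: algebra_simps)
    qed
    moreover have h2: "\<And>a s n::real. s \<noteq> 0 \<Longrightarrow> a / s + n = (a + n * s) / s"
      by (simp add: field_simps)
    moreover have "(of_nat e + 1::real) > 0" by simp
    ultimately show ?thesis by (simp only: h2) (rule divide_pos_pos)
  qed
  ultimately have "Q 1 + Q 2 > 0" using Ppos by simp
  hence "(\<Sum>j=1..p. Q j) > 0" using Qs rest by linarith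
  thus ?thesis unfolding sumeq by simp
qed

theorem theorem2p5:
  fixes d p :: nat
  assumes "p \<ge> 2" and "d > p"
  shows "(\<lambda>k::int. complex_of_int k) ` {-(int d - int p)..-1} \<subseteq> {a. f_dp d p a = 0} \<inter> \<real>
       \<and> {a. f_dp d p a = 0} \<inter> \<real> \<subseteq> complex_of_real ` {-(real d - 2)..<0}"
proof
  show "(\<lambda>k::int. complex_of_int k) ` {-(int d - int p)..-1} \<subseteq> {a. f_dp d p a = 0} \<inter> \<real>"
  proof
    fix a assume "a \<in> (\<lambda>k::int. complex_of_int k) ` {-(int d - int p)..-1}"
    then obtain k where k: "k \<in> {-(int d - int p)..-1}" and a: "a = of_int k" by auto
    have "f_dp d p a = 0" unfolding f_pochhammer
    proof (rule sum.neutral, rule ballI)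
      fix j assume j: "j \<in> {1..p}"
      have "pochhammer (a+1) (d-j) = 0"
        unfolding pochhammer_eq_0_iff
      proof (intro exI conjI)
        show "nat (-k - 1) < d - j" using k j by auto
        show "a + 1 = - of_nat (nat (-k-1))" using k a by simp
      qed
      thus "pochhammer a (j-1) * pochhammer (a+1) (d-j) / (fact (j-1) * fact (d-j)) = 0" by simp
    qed
    thus "a \<in> {a. f_dp d p a = 0} \<inter> \<real>" using a by auto
  qed
next
  show "{a. f_dp d p a = 0} \<inter> \<real> \<subseteq> complex_of_real ` {-(real d - 2)..<0}"
  proof
    fix a assume a: "a \<in> {a. f_dp d p a = 0} \<inter> \<real>"
    then obtain r where r: "a = of_real r" by (auto elim: Reals_cases)
    have z: "(\<Sum>j=1..p. T d r j) = 0" using a r f_real[of d p r] of_real_eq_0_iff by (metis (mono_tags) IntD1 mem_Collect_eq)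
    have "r < 0" using pos_part[of r p d] assms z by (cases "r \<ge> 0") auto
    moreover have "r \<ge> -(real d - 2)"
    proof (rule ccontr)
      assume "\<not> r \<ge> -(real d - 2)"
      hence "-r > real d - 2" by simp
      from neg_part[OF this assms] z show False by simp
    qed
    ultimately show "a \<in> complex_of_real ` {-(real d - 2)..<0}" using r by auto
  qed
qed

end
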